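(* Let $n\ge1$, let $\alpha_0,\ldots,\alpha_{2n+1}\in\mathbb{C}$ with $\sum_{i=0}^{2n+1}\alpha_i=1$, and assume \[ \alpha_{2i}^{2j-1}\notin\mathbb{Z},\quad \sum_{i=0}^n\alpha_{2i+1}\notin\mathbb{Z},\quad \alpha_{2i-1}^{2j-1}\notin\mathbb{Z}\qquad(i=1,\ldots,n,\ j=1,\ldots,n-i+1). \] Consider the linear system \[ \frac{d\mathbf{x}}{dt}=\Big(\frac{A_0}{t}+\frac{A_1}{1-t}\Big)\mathbf{x},\qquad A_0=\sum_{i=0}^{n-1}\big(-\alpha_{2i+2}^{2n-2i-1}\big)E_{i,i}+\sum_{i=0}^{n-1}\sum_{j=i+1}^{n}\alpha_{2j+1}E_{i,j},\quad A_1=\sum_{i=0}^{n}\sum_{j=0}^{n}\alpha_{2j+1}E_{i,j}, \] for $\mathbf{x}={}^t(x_0,\ldots,x_n)$. For $k,l\in\{0,\ldots,n\}$ define \[ f^{k,l}=\prod_{i=1}^{l}\frac{\alpha_{2k-2i+3}^{2i-2}}{\alpha_{2k-2i+2}^{2i-1}}\cdot{}_{n+1}F_n\left[\begin{array}{c}a_0,\ldots,a_n\\ b_1,\ldots,b_n\end{array};t\right], \] where $a_0=\alpha_{2k-2n+1}^{2n}$; $a_i=1+\alpha_{2k-2i+3}^{2i-2}$, $b_i=1+\alpha_{2k-2i+2}^{2i-1}$ for $i=1,\ldots,l$; and $a_i=\alpha_{2k-2i+3}^{2i-2}$, $b_i=\alpha_{2k-2i+2}^{2i-1}$ for $i=l+1,\ldots,n$.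 Then on the domain $|t|<1$ the system admits the fundamental solutions $\mathbf{x}^{(k)}$, $k=0,\ldots,n$, given by \[ \mathbf{x}^{(k)}=t^{-\alpha_{2k+2}^{2n-2k-1}}\,{}^t\big(f^{k,k},f^{k,k-1},\ldots,f^{k,0},\,tf^{k,n},tf^{k,n-1},\ldots,tf^{k,k+1}\big), \] i.e. the $i$-th component is $t^{-\alpha_{2k+2}^{2n-2k-1}}f^{k,k-i}$ for $0\le i\le k$ and $t^{-\alpha_{2k+2}^{2n-2k-1}}\,t\,f^{k,n+k+1-i}$ for $k+1\le i\le n$.
   Context: Indices of the parameters $\alpha_i$ are taken modulo $2n+2$. For integers $k,l$, $\alpha_k^l=0$ if $l<0$ and $\alpha_k^l=\sum_{i=k}^{k+l}\alpha_i$ if $l\ge0$. $E_{i,j}=(\delta_{i,k}\delta_{j,l})_{k,l=0}^{n}$ is the $(n+1)\times(n+1)$ matrix unit. The generalized hypergeometric function is ${}_{n+1}F_n\left[\begin{array}{c}a_0,\ldots,a_n\\ b_1,\ldots,b_n\end{array};t\right]=\sum_{i=0}^\infty\frac{(a_0)_i\cdots(a_n)_i}{(1)_i(b_1)_i\cdots(b_n)_i}t^i$, with $(a)_i=a(a+1)\cdots(a+i-1)$. "Fundamental solutions" means these $n+1$ vector functions are solutions forming a fundamental system. *)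

theory Defs
  imports "HOL-Analysis.Analysis"
begin

text \<open>Parameters alpha_0..alpha_{2n+1} are given as a function on nat; indices are
  read modulo 2n+2.\<close>
definition alpha_ix :: "nat \<Rightarrow> (nat \<Rightarrow> complex) \<Rightarrow> int \<Rightarrow> complex" where
  "alpha_ix n \<alpha> k = \<alpha> (nat (k mod (2 * int n + 2)))"

definition alpha_sum :: "nat \<Rightarrow> (nat \<Rightarrow> complex) \<Rightarrow> int \<Rightarrow> int \<Rightarrow> complex" where
  "alpha_sum n \<alpha> k l = (if l < 0 then 0 else (\<Sum>m\<in>{k..k+l}. alpha_ix n \<alpha> m))"

definition hypF :: "nat \<Rightarrow> (nat \<Rightarrow> complex) \<Rightarrow> (nat \<Rightarrow> complex) \<Rightarrow> complex \<Rightarrow> complex" where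
  "hypF n a b t = (\<Sum>i. (\<Prod>j\<in>{0..n}. pochhammer (a j) i)
      / (fact i * (\<Prod>j\<in>{1..n}. pochhammer (b j) i)) * t ^ i)"

definition matA0 :: "nat \<Rightarrow> (nat \<Rightarrow> complex) \<Rightarrow> nat \<Rightarrow> nat \<Rightarrow> complex" where
  "matA0 n \<alpha> i j =
     (if i < n \<and> j = i then - alpha_sum n \<alpha> (2 * int i + 2) (2 * int n - 2 * int i - 1) else 0)
   + (if i < n \<and> i < j \<and> j \<le> n then alpha_ix n \<alpha> (2 * int j + 1) else 0)"

definition matA1 :: "nat \<Rightarrow> (nat \<Rightarrow> complex) \<Rightarrow> nat \<Rightarrow> nat \<Rightarrow> complex" where
  "matA1 n \<alpha> i j = (if i \<le> n \<and> j \<le> n then alpha_ix n \<alpha> (2 * int j + 1) else 0)"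

definition par_a :: "nat \<Rightarrow> (nat \<Rightarrow> complex) \<Rightarrow> nat \<Rightarrow> nat \<Rightarrow> nat \<Rightarrow> complex" where
  "par_a n \<alpha> k l i =
     (if i = 0 then alpha_sum n \<alpha> (2 * int k - 2 * int n + 1) (2 * int n)
      else if i \<le> l then 1 + alpha_sum n \<alpha> (2 * int k - 2 * int i + 3) (2 * int i - 2)
      else alpha_sum n \<alpha> (2 * int k - 2 * int i + 3) (2 * int i - 2))"

definition par_b :: "nat \<Rightarrow> (nat \<Rightarrow> complex) \<Rightarrow> nat \<Rightarrow> nat \<Rightarrow> nat \<Rightarrow> complex" where
  "par_b n \<alpha> k l i =
     (if i \<le> l then 1 + alpha_sum n \<alpha> (2 * int k - 2 * int i + 2) (2 * int i - 1)
      else alpha_sum n \<alpha> (2 * int k - 2 * int i + 2) (2 * int i - 1))"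

definition fkl :: "nat \<Rightarrow> (nat \<Rightarrow> complex) \<Rightarrow> nat \<Rightarrow> nat \<Rightarrow> complex \<Rightarrow> complex" where
  "fkl n \<alpha> k l t =
     (\<Prod>i\<in>{1..l}. alpha_sum n \<alpha> (2 * int k - 2 * int i + 3) (2 * int i - 2)
                 / alpha_sum n \<alpha> (2 * int k - 2 * int i + 2) (2 * int i - 1))
     * hypF n (par_a n \<alpha> k l) (par_b n \<alpha> k l) t"

definition solx :: "nat \<Rightarrow> (nat \<Rightarrow> complex) \<Rightarrow> nat \<Rightarrow> nat \<Rightarrow> complex \<Rightarrow> complex" where
  "solx n \<alpha> k i t =
     t powr (- alpha_sum n \<alpha> (2 * int k + 2) (2 * int n - 2 * int k - 1)) *
     (if i \<le> k then fkl n \<alpha> k (k - i) t else t * fkl n \<alpha> k (n + k + 1 - i) t)"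

text \<open>Domain: the unit disc slit along the non-positive real axis, where the
  principal branch of t^c is holomorphic.\<close>
definition slit_disc :: "complex set" where
  "slit_disc = {t. norm t < 1 \<and> \<not> (Im t = 0 \<and> Re t \<le> 0)}"

end

theory Submission
  imports Defs "HOL-Complex_Analysis.Conformal_Mappings" "HOL-Real_Asymp.Real_Asymp"
begin

lemma sum_int_ivl: "(\<Sum>m\<in>{s..s + int len - 1}. f m) = (\<Sum>j<len. f (s + int j))"
proof (induction len)
  case 0 then show ?case by simp
next
  case (Suc len)
  have "{s..s + int (Suc len) - 1} = insert (s + int len) {s..s + int len - 1}" by auto
  then show ?case using Suc by (simp add: add.commute)
qed

locale hs =
  fixes n :: nat and \<alpha> :: "nat \<Rightarrow> complex"
  assumes tot: "(\<Sum>i\<in>{0..2*n+1}. \<alpha> i) = 1"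
    and h3: "\<And>i j. 1 \<le> i \<Longrightarrow> i \<le> n \<Longrightarrow> 1 \<le> j \<Longrightarrow> j \<le> n - i + 1 \<Longrightarrow>
           alpha_sum n \<alpha> (2 * int i) (2 * int j - 1) \<notin> \<int>"
begin

abbreviation "ax \<equiv> alpha_ix n \<alpha>"
definition Sx :: "int \<Rightarrow> nat \<Rightarrow> complex" where
  "Sx s len = (\<Sum>j<len. ax (s + int j))"

lemma Sx_add: "Sx s (a + b) = Sx s a + Sx (s + int a) b"
  by (induction b) (auto simp: Sx_def add.assoc)

lemma ax_per: "ax (m + (2 * int n + 2)) = ax m"
  by (simp add: alpha_ix_def)

lemma ax_per': "ax (m - (2 * int n + 2)) = ax m"
  using ax_per[of "m - (2 * int n + 2)"] by simp

lemma Sx_shift1: "Sx (s + 1) (2*n+2) = Sx s (2*n+2)"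
proof -
  have "Sx s (1 + (2*n+2)) = ax s + Sx (s+1) (2*n+2)"
    using Sx_add[of s 1 "2*n+2"] by (simp add: Sx_def)
  moreover have "Sx s ((2*n+2) + 1) = Sx s (2*n+2) + ax s"
    using Sx_add[of s "2*n+2" 1] ax_per[of s] by (simp add: Sx_def add.commute)
  ultimately show ?thesis by (simp add: add.commute)
qed

lemma Sx_full: "Sx s (2*n+2) = 1"
proof -
  have 0: "Sx 0 (2*n+2) = 1"
  proof -
    have "Sx 0 (2*n+2) = (\<Sum>j<2*n+2. \<alpha> j)"
      unfolding Sx_def alpha_ix_def
      by (intro sum.cong refl) (simp add: nat_mod_as_int[symmetric] del: of_nat_Suc)
    also have "\<dots> = (\<Sum>i\<in>{0..2*n+1}. \<alpha> i)"
      by (intro sum.cong) auto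
    finally show ?thesis using tot by simp
  qed
  show ?thesis
  proof (induction s rule: int_induct[where k=0])
    case base then show ?case using 0 .
  next
    case (step1 i) then show ?case using Sx_shift1[of i] by simp
  next
    case (step2 i) then show ?case using Sx_shift1[of "i-1"] by simp
  qed
qed

lemma asum_Sx: "l \<ge> -1 \<Longrightarrow> alpha_sum n \<alpha> s l = Sx s (nat (l+1))"
  using sum_int_ivl[where s=s and len="nat (l+1)" and f=ax]
  by (auto simp: alpha_sum_def Sx_def)


definition "Ek j = - alpha_sum n \<alpha> (2 * int j + 2) (2 * int n - 2 * int j - 1)"
definition "Ak k l = alpha_sum n \<alpha> (2 * int k - 2 * int l + 3) (2 * int l - 2)"
definition "Bk k l = alpha_sum n \<alpha> (2 * int k - 2 * int l + 2) (2 * int l - 1)"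

lemma Ek_Sx: "j \<le> n \<Longrightarrow> Ek j = - Sx (2 * int j + 2) (2*n - 2*j)"
proof -
  assume "j \<le> n"
  then have "nat (2 * int n - 2 * int j - 1 + 1) = 2*n - 2*j" by linarith
  then show ?thesis unfolding Ek_def using \<open>j \<le> n\<close> by (subst asum_Sx) auto
qed

lemma Bk_Sx: "Bk k l = Sx (2 * int k - 2 * int l + 2) (2*l)"
  unfolding Bk_def by (subst asum_Sx) (auto simp: nat_mult_distrib)

lemma Ak_Sx: "l \<ge> 1 \<Longrightarrow> Ak k l = Sx (2 * int k - 2 * int l + 3) (2*l - 1)"
  unfolding Ak_def by (subst asum_Sx) (auto simp: nat_diff_distrib nat_mult_distrib)

lemma Sx1: "Sx s (Suc 0) = ax s" by (simp add: Sx_def)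
lemma Sx2: "Sx s 2 = ax s + ax (s+1)" by (simp add: Sx_def numeral_2_eq_2)

lemma Ek_n: "Ek n = 0" by (simp add: Ek_def alpha_sum_def)

lemma Ek_step: "i < n \<Longrightarrow> Ek i = Ek (Suc i) - ax (2 * int i + 2) - ax (2 * int i + 3)"
proof -
  assume i: "i < n"
  have "Sx (2 * int i + 2) (2 + (2*n - 2*Suc i)) = Sx (2 * int i + 2) 2 + Sx (2 * int i + 4) (2*n - 2*Suc i)"
    by (subst Sx_add) (simp add: add.commute)
  moreover have "2 + (2*n - 2*Suc i) = 2*n - 2*i" using i by simp
  ultimately show ?thesis using i by (simp add: Ek_Sx Sx2 algebra_simps)
qed

lemma Ek_diff_le: "i \<le> k \<Longrightarrow> k \<le> n \<Longrightarrow> Ek k - Ek i = Bk k (k - i)"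
proof -
  assume a: "i \<le> k" "k \<le> n"
  have "Sx (2 * int i + 2) ((2*k - 2*i) + (2*n - 2*k)) = Sx (2 * int i + 2) (2*k - 2*i) + Sx (2 * int k + 2) (2*n - 2*k)"
    using a by (subst Sx_add) (simp add: of_nat_diff ac_simps)
  moreover have "(2*k - 2*i) + (2*n - 2*k) = 2*n - 2*i" using a by simp
  ultimately show ?thesis using a by (simp add: Ek_Sx Bk_Sx of_nat_diff algebra_simps ac_simps)
qed

lemma Ek_diff_gt: "k < i \<Longrightarrow> i \<le> n \<Longrightarrow> Ek k - Ek i = Bk k (n + k + 1 - i) - 1"
proof -
  assume a: "k < i" "i \<le> n"
  have 1: "Sx (2 * int k + 2) ((2*i - 2*k) + (2*n - 2*i)) = Sx (2 * int k + 2) (2*i - 2*k) + Sx (2 * int i + 2) (2*n - 2*i)"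
    using a by (subst Sx_add) (simp add: of_nat_diff ac_simps)
  have 2: "Sx (2 * int i - 2 * int n) ((2*(n + k + 1 - i)) + (2*i - 2*k)) = Sx (2 * int i - 2 * int n) (2*(n + k + 1 - i)) + Sx (2 * int k + 2) (2*i - 2*k)"
    using a by (subst Sx_add) (simp add: of_nat_diff ac_simps)
  have 3: "(2*(n + k + 1 - i)) + (2*i - 2*k) = 2*n+2" using a by simp
  have 4: "(2*i - 2*k) + (2*n - 2*i) = 2*n - 2*k" using a by simp
  have 5: "2 * int k - 2 * int (n + k + 1 - i) + 2 = 2 * int i - 2 * int n" using a by (simp add: of_nat_diff)
  show ?thesis using a 1 2 Sx_full[of "2 * int i - 2 * int n"] unfolding 3 4
    by (simp add: Ek_Sx Bk_Sx 5 algebra_simps ac_simps)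
qed

lemma Bk_Ak: "l \<ge> 1 \<Longrightarrow> Bk k l = Ak k l + ax (2 * int k - 2 * int l + 2)"
proof -
  assume l: "l \<ge> 1"
  have "Sx (2 * int k - 2 * int l + 2) (1 + (2*l - 1)) = Sx (2 * int k - 2 * int l + 2) 1 + Sx (2 * int k - 2 * int l + 3) (2*l - 1)"
    by (subst Sx_add) (simp add: add.commute)
  moreover have "1 + (2*l - 1) = 2 * l" using l by simp
  ultimately show ?thesis using l by (simp add: Bk_Sx Ak_Sx Sx1)
qed

lemma Ak_top: "Ak k (n+1) = 1 - ax (2 * int k + 2)"
proof -
  have "Sx (2 * int k - 2 * int n + 1) ((2*n+1) + 1) = Sx (2 * int k - 2 * int n + 1) (2*n+1) + Sx (2 * int k + 2) 1"
    by (subst Sx_add) (simp add: ac_simps)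
  then show ?thesis using Sx_full[of "2 * int k - 2 * int n + 1"]
    by (simp add: Ak_Sx Sx1 algebra_simps ac_simps)
qed

lemma E0: "Ek 0 = ax 0 + ax 1 - 1"
proof -
  have "Sx 0 (2 + 2*n) = Sx 0 2 + Sx 2 (2*n)" by (subst Sx_add) (simp add: ac_simps)
  then show ?thesis using Sx_full[of 0] by (simp add: Ek_Sx Sx2 algebra_simps ac_simps)
qed

lemma h3': "1 \<le> i \<Longrightarrow> i \<le> n \<Longrightarrow> 1 \<le> j \<Longrightarrow> j \<le> n - i + 1 \<Longrightarrow> Sx (2 * int i) (2*j) \<notin> \<int>"
  using h3[of i j] by (simp add: asum_Sx nat_mult_distrib)

lemma nonint_neg: "(x::complex) \<notin> \<int> \<Longrightarrow> - x \<notin> \<int>"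
  using Ints_minus by fastforce
lemma nonint_1m: "(x::complex) \<notin> \<int> \<Longrightarrow> 1 - x \<notin> \<int>"
  using Ints_diff[of 1 "1 - x"] by force

lemma Bk_nonint: "1 \<le> l \<Longrightarrow> l \<le> n \<Longrightarrow> k \<le> n \<Longrightarrow> Bk k l \<notin> \<int>"
proof -
  assume a: "1 \<le> l" "l \<le> n" "k \<le> n"
  show ?thesis
  proof (cases "l \<le> k")
    case True
    have "2 * int k - 2 * int l + 2 = 2 * int (k - l + 1)" using True by (simp add: of_nat_diff)
    then show ?thesis using h3'[of "k - l + 1" l] a True by (simp add: Bk_Sx ac_simps)
  next
    case False
    have "Sx (2 * int k - 2 * int l + 2) (2*l + 2*(n - l + 1)) = Sx (2 * int k - 2 * int l + 2) (2*l) + Sx (2 * int (k+1)) (2*(n - l + 1))"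
      by (subst Sx_add) (simp add: ac_simps)
    moreover have "2*l + 2*(n - l + 1) = 2*n+2" using a by simp
    ultimately have "Bk k l = 1 - Sx (2 * int (k+1)) (2*(n - l + 1))"
      using Sx_full by (simp add: Bk_Sx algebra_simps)
    then show ?thesis using h3'[of "k+1" "n - l + 1"] a False nonint_1m by auto
  qed
qed

lemma Ek_nonint: "k < j \<Longrightarrow> j \<le> n \<Longrightarrow> Ek k - Ek j \<notin> \<int>"
proof -
  assume a: "k < j" "j \<le> n"
  have "Sx (2 * int k + 2) ((2*j - 2*k) + (2*n - 2*j)) = Sx (2 * int k + 2) (2*j - 2*k) + Sx (2 * int j + 2) (2*n - 2*j)"
    using a by (subst Sx_add) (simp add: of_nat_diff ac_simps)
  moreover have "(2*j - 2*k) + (2*n - 2*j) = 2*n - 2*k" using a by simp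
  ultimately have "Ek k - Ek j = - Sx (2 * int (k+1)) (2 * (j - k))"
    using a by (simp add: Ek_Sx algebra_simps ac_simps)
  then show ?thesis using h3'[of "k+1" "j-k"] a nonint_neg by auto
qed


definition "Ck k l m = pochhammer (Ak k (n+1)) m / fact m
   * (\<Prod>j\<in>{1..l}. pochhammer (Ak k j) (m+1) / pochhammer (Bk k j) (m+1))
   * (\<Prod>j\<in>{l+1..n}. pochhammer (Ak k j) m / pochhammer (Bk k j) m)"

lemma Bk_m_nz: "1 \<le> l \<Longrightarrow> l \<le> n \<Longrightarrow> k \<le> n \<Longrightarrow> of_nat m + Bk k l \<noteq> 0"
proof
  assume a: "1 \<le> l" "l \<le> n" "k \<le> n" "of_nat m + Bk k l = 0"
  then have "Bk k l = - of_nat m" by (simp add: eq_neg_iff_add_eq_0 add.commute)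
  then have "Bk k l \<in> \<int>" by simp
  with Bk_nonint a show False by blast
qed

lemma F1: assumes "1 \<le> l" "l \<le> n" "k \<le> n"
  shows "(of_nat m + Bk k l) * Ck k l m = (of_nat m + Ak k l) * Ck k (l-1) m"
proof -
  have s1: "{1..l} = insert l {1..l-1}" using assms by auto
  have s2: "{l-1+1..n} = insert l {l+1..n}" using assms by auto
  have nz: "of_nat m + Bk k l \<noteq> 0" using Bk_m_nz assms by blast
  define X where "X = (\<Prod>j\<in>{1..l-1}. pochhammer (Ak k j) (m+1) / pochhammer (Bk k j) (m+1))"
  define Y where "Y = (\<Prod>j\<in>{l+1..n}. pochhammer (Ak k j) m / pochhammer (Bk k j) m)"
  define K where "K = pochhammer (Ak k (n+1)) m / fact m"
  define r1 where "r1 = pochhammer (Ak k l) (m+1) / pochhammer (Bk k l) (m+1)"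
  define r0 where "r0 = pochhammer (Ak k l) m / pochhammer (Bk k l) m"
  have 1: "Ck k l m = K * (r1 * X) * Y"
    unfolding Ck_def X_def Y_def K_def r1_def using assms by (subst s1) simp
  have 2: "Ck k (l-1) m = K * X * (r0 * Y)"
    unfolding Ck_def X_def Y_def K_def r0_def by (subst s2) simp
  have r: "r1 = r0 * ((Ak k l + of_nat m) / (Bk k l + of_nat m))"
    unfolding r1_def r0_def by (simp add: pochhammer_Suc)
  have key: "(of_nat m + Bk k l) * r1 = (of_nat m + Ak k l) * r0"
    unfolding r using nz by (simp add: field_simps)
  have "(of_nat m + Bk k l) * Ck k l m = K * X * Y * ((of_nat m + Bk k l) * r1)"
    unfolding 1 by (simp add: mult_ac)
  also have "\<dots> = (of_nat m + Ak k l) * Ck k (l-1) m"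
    unfolding key 2 by (simp add: mult_ac)
  finally show ?thesis .
qed

lemma F2: "(of_nat m + Ak k (n+1)) * Ck k n m = of_nat (m+1) * Ck k 0 (m+1)"
proof -
  define P where "P = (\<Prod>j\<in>{1..n}. pochhammer (Ak k j) (m+1) / pochhammer (Bk k j) (m+1))"
  define a where "a = Ak k (n+1)"
  have 1: "Ck k n m = pochhammer a m / fact m * P" unfolding Ck_def P_def a_def by simp
  have 2: "Ck k 0 (m+1) = pochhammer a (Suc m) / fact (Suc m) * P" unfolding Ck_def P_def a_def by simp
  have f: "(fact m :: complex) \<noteq> 0" by simp
  have f2: "(fact (Suc m) :: complex) = of_nat (Suc m) * fact m" by simp
  have nz: "(of_nat (Suc m) :: complex) \<noteq> 0" by (simp del: of_nat_Suc)
  show ?thesis unfolding 1 2 a_def[symmetric] f2 using f nz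
    by (simp add: pochhammer_Suc field_simps del: of_nat_Suc)
qed

lemma F3: "Ck k 0 0 = 1"
  unfolding Ck_def by simp

definition "Gam k i = (if i \<le> k then Abs_fps (Ck k (k-i)) else fps_X * Abs_fps (Ck k (n+k+1-i)))"
abbreviation "gam k i m \<equiv> fps_nth (Gam k i) m"

lemma contig: assumes "i < n" "k \<le> n"
  shows "(Ek k - Ek i + of_nat m) * gam k i m = (Ek k - Ek i - ax (2 * int i + 2) + of_nat m) * gam k (Suc i) m"
proof (cases "i < k")
  case True
  have e: "Ek k - Ek i = Bk k (k-i)" using Ek_diff_le True assms by simp
  have b: "Bk k (k-i) - ax (2 * int i + 2) = Ak k (k-i)"
    using Bk_Ak[of "k-i" k] True by (simp add: of_nat_diff)
  have "k - Suc i = k - i - 1" by simp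
  then show ?thesis using F1[of "k-i" k m] True assms e b
    by (simp add: Gam_def algebra_simps)
next
  case False
  show ?thesis
  proof (cases "i = k")
    case True
    have a: "Ak k (n+1) - 1 = - ax (2 * int i + 2)" using Ak_top True by simp
    show ?thesis
    proof (cases m)
      case 0 then show ?thesis using True by (simp add: Gam_def)
    next
      case (Suc m')
      have f: "(of_nat m' + (1 - ax (2 * int i + 2))) * Ck k n m' = of_nat (m'+1) * Ck k 0 (m'+1)"
        using F2[of m' k] Ak_top[of k] True by simp
      have g1: "gam k i m = Ck k 0 (Suc m')" using True Suc by (simp add: Gam_def)
      have g2: "gam k (Suc i) m = Ck k n m'" using True Suc assms by (simp add: Gam_def)
      have "(Ek k - Ek i + of_nat m) * gam k i m = of_nat (m'+1) * Ck k 0 (m'+1)"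
        using True Suc g1 by simp
      also have "\<dots> = (of_nat m' + (1 - ax (2 * int i + 2))) * Ck k n m'" using f by simp
      also have "\<dots> = (Ek k - Ek i - ax (2 * int i + 2) + of_nat m) * gam k (Suc i) m"
        using True Suc g2 by (simp add: algebra_simps)
      finally show ?thesis .
    qed
  next
    case False2: False
    then have ki: "k < i" using False by simp
    define l where "l = n + k + 1 - i"
    have l: "1 \<le> l" "l \<le> n" using ki assms by (auto simp: l_def)
    have e: "Ek k - Ek i = Bk k l - 1" using Ek_diff_gt ki assms by (simp add: l_def)
    have ix: "2 * int k - 2 * int l + 2 = (2 * int i + 2) - (2 * int n + 2)"
      using ki assms by (simp add: l_def of_nat_diff)
    have b: "Bk k l - ax (2 * int i + 2) = Ak k l"
      using Bk_Ak[of l k] l ix ax_per'[of "2 * int i + 2"] by simp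
    have l2: "n + k + 1 - Suc i = l - 1" by (simp add: l_def)
    show ?thesis
    proof (cases m)
      case 0 then show ?thesis using ki by (simp add: Gam_def)
    next
      case (Suc m')
      have g1: "gam k i (Suc m') = Ck k l m'" using ki by (simp add: Gam_def l_def)
      have g2: "gam k (Suc i) (Suc m') = Ck k (l-1) m'" using ki l2 by (simp add: Gam_def)
      have "(Ek k - Ek i + of_nat m) * gam k i m = (of_nat m' + Bk k l) * Ck k l m'"
        unfolding Suc g1 e by (simp add: algebra_simps)
      also have "\<dots> = (of_nat m' + Ak k l) * Ck k (l-1) m'" using F1[of l k m'] l assms by simp
      also have "\<dots> = (Ek k - Ek i - ax (2 * int i + 2) + of_nat m) * gam k (Suc i) m"
        unfolding Suc g2 e b[symmetric] by (simp add: algebra_simps)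
      finally show ?thesis .
    qed
  qed
qed

lemma wrap0: "k \<le> n \<Longrightarrow> Ek k * gam k n 0 = 0"
  by (cases "k = n") (auto simp: Gam_def Ek_n)

lemma wrap: assumes "k \<le> n"
  shows "(Ek k + of_nat (Suc m)) * gam k n (Suc m) = (Ek k + of_nat (Suc m) - ax 0) * gam k 0 m"
proof (cases "k = n")
  case True
  have a: "Ak k (n+1) = 1 - ax 0" using Ak_top[of n] ax_per[of 0] True by simp
  have g1: "gam k n (Suc m) = Ck k 0 (Suc m)" using True by (simp add: Gam_def)
  have g2: "gam k 0 m = Ck k n m" using True by (simp add: Gam_def)
  have "(Ek k + of_nat (Suc m)) * gam k n (Suc m) = of_nat (m+1) * Ck k 0 (m+1)"
    unfolding g1 using True Ek_n by simp
  also have "\<dots> = (of_nat m + Ak k (n+1)) * Ck k n m" using F2[of m k] by simp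
  also have "\<dots> = (Ek k + of_nat (Suc m) - ax 0) * gam k 0 m"
    unfolding g2 a using True Ek_n by (simp add: algebra_simps)
  finally show ?thesis .
next
  case False
  then have kn: "k < n" using assms by simp
  have e: "Ek k = Bk k (k+1) - 1" using Ek_diff_gt[of k n] kn Ek_n by simp
  have b: "Bk k (k+1) - ax 0 = Ak k (k+1)" using Bk_Ak[of "k+1" k] by simp
  have g1: "gam k n (Suc m) = Ck k (k+1) m" using kn by (simp add: Gam_def)
  have g2: "gam k 0 m = Ck k k m" by (simp add: Gam_def)
  have "(Ek k + of_nat (Suc m)) * gam k n (Suc m) = (of_nat m + Bk k (k+1)) * Ck k (k+1) m"
    unfolding g1 e by (simp add: algebra_simps)
  also have "\<dots> = (of_nat m + Ak k (k+1)) * Ck k k m" using F1[of "k+1" k m] kn by simp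
  also have "\<dots> = (Ek k + of_nat (Suc m) - ax 0) * gam k 0 m"
    unfolding g2 e b[symmetric] by (simp add: algebra_simps)
  finally show ?thesis .
qed

lemma Plemma: assumes "k \<le> n" "i \<le> n"
  shows "(Ek k + of_nat m - Ek i) * gam k i m - (\<Sum>j\<in>{i<..n}. ax (2 * int j + 1) * gam k j m)
         = (Ek k + of_nat m) * gam k n m"
  using assms(2)
proof (induction "n - i" arbitrary: i)
  case 0 then have "i = n" by simp
  then show ?case by (simp add: Ek_n)
next
  case (Suc d)
  then have i: "i < n" by simp
  have IH: "(Ek k + of_nat m - Ek (Suc i)) * gam k (Suc i) m - (\<Sum>j\<in>{Suc i<..n}. ax (2 * int j + 1) * gam k j m)
         = (Ek k + of_nat m) * gam k n m" using Suc i by simp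
  have set: "{i<..n} = insert (Suc i) {Suc i<..n}" using i by auto
  have c: "(Ek k - Ek i + of_nat m) * gam k i m = (Ek k - Ek i - ax (2 * int i + 2) + of_nat m) * gam k (Suc i) m"
    using contig i assms by blast
  have e: "Ek i = Ek (Suc i) - ax (2 * int i + 2) - ax (2 * int i + 3)" using Ek_step i by blast
  have x: "ax (2 * int (Suc i) + 1) = ax (2 * int i + 3)" by (simp add: algebra_simps)
  have c': "(Ek k + of_nat m - Ek i) * gam k i m = (Ek k + of_nat m - Ek (Suc i) + ax (2 * int i + 3)) * gam k (Suc i) m"
  proof -
    have "(Ek k + of_nat m - Ek i) * gam k i m = (Ek k - Ek i + of_nat m) * gam k i m" by (simp add: algebra_simps)
    also have "\<dots> = (Ek k - Ek i - ax (2 * int i + 2) + of_nat m) * gam k (Suc i) m" by (rule c)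
    also have "\<dots> = (Ek k + of_nat m - Ek (Suc i) + ax (2 * int i + 3)) * gam k (Suc i) m"
      by (simp add: e algebra_simps)
    finally show ?thesis .
  qed
  have sm: "(\<Sum>j\<in>{i<..n}. ax (2 * int j + 1) * gam k j m) = ax (2 * int i + 3) * gam k (Suc i) m + (\<Sum>j\<in>{Suc i<..n}. ax (2 * int j + 1) * gam k j m)"
    unfolding set using x by simp
  have "(Ek k + of_nat m - Ek i) * gam k i m - (\<Sum>j\<in>{i<..n}. ax (2 * int j + 1) * gam k j m)
     = (Ek k + of_nat m - Ek (Suc i) + ax (2 * int i + 3)) * gam k (Suc i) m - (ax (2 * int i + 3) * gam k (Suc i) m + (\<Sum>j\<in>{Suc i<..n}. ax (2 * int j + 1) * gam k j m))"
    unfolding c' sm ..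
  also have "\<dots> = (Ek k + of_nat m - Ek (Suc i)) * gam k (Suc i) m - (\<Sum>j\<in>{Suc i<..n}. ax (2 * int j + 1) * gam k j m)"
    by (simp add: algebra_simps)
  also have "\<dots> = (Ek k + of_nat m) * gam k n m" by (rule IH)
  finally show ?case .
qed

lemma Slemma: assumes "k \<le> n" "N \<le> n"
  shows "(\<Sum>j<Suc N. ax (2 * int j + 1) * gam k j M)
     = (Ek k + of_nat M + 1 - ax 0) * gam k 0 M - (Ek k + of_nat M - Ek N) * gam k N M"
  using assms(2)
proof (induction N)
  case 0 then show ?case by (simp add: E0 algebra_simps)
next
  case (Suc N)
  then have N: "N < n" by simp
  have IH: "(\<Sum>j<Suc N. ax (2 * int j + 1) * gam k j M)
     = (Ek k + of_nat M + 1 - ax 0) * gam k 0 M - (Ek k + of_nat M - Ek N) * gam k N M" using Suc N by simp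
  have c: "(Ek k - Ek N + of_nat M) * gam k N M = (Ek k - Ek N - ax (2 * int N + 2) + of_nat M) * gam k (Suc N) M"
    using contig N assms by blast
  have e: "Ek N = Ek (Suc N) - ax (2 * int N + 2) - ax (2 * int N + 3)" using Ek_step N by blast
  have x: "ax (2 * int (Suc N) + 1) = ax (2 * int N + 3)" by (simp add: algebra_simps)
  have c': "(Ek k + of_nat M - Ek N) * gam k N M = (Ek k + of_nat M - Ek (Suc N) + ax (2 * int N + 3)) * gam k (Suc N) M"
  proof -
    have "(Ek k + of_nat M - Ek N) * gam k N M = (Ek k - Ek N + of_nat M) * gam k N M" by (simp add: algebra_simps)
    also have "\<dots> = (Ek k - Ek N - ax (2 * int N + 2) + of_nat M) * gam k (Suc N) M" by (rule c)
    also have "\<dots> = (Ek k + of_nat M - Ek (Suc N) + ax (2 * int N + 3)) * gam k (Suc N) M"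
      by (simp add: e algebra_simps)
    finally show ?thesis .
  qed
  have "(\<Sum>j<Suc (Suc N). ax (2 * int j + 1) * gam k j M) = (\<Sum>j<Suc N. ax (2 * int j + 1) * gam k j M) + ax (2 * int N + 3) * gam k (Suc N) M"
    using x by simp
  also have "\<dots> = (Ek k + of_nat M + 1 - ax 0) * gam k 0 M - (Ek k + of_nat M - Ek (Suc N) + ax (2 * int N + 3)) * gam k (Suc N) M + ax (2 * int N + 3) * gam k (Suc N) M"
    unfolding IH c' ..
  also have "\<dots> = (Ek k + of_nat M + 1 - ax 0) * gam k 0 M - (Ek k + of_nat M - Ek (Suc N)) * gam k (Suc N) M"
    by (simp add: algebra_simps)
  finally show ?case .
qed


lemma oneX_nth: "fps_nth ((1 - fps_X) * (H :: complex fps)) m = fps_nth H m - (if m = 0 then 0 else fps_nth H (m - 1))"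
  by (simp add: left_diff_distrib)

lemma R0: assumes "i \<le> n"
  shows "(\<Sum>j\<in>{0..n}. matA0 n \<alpha> i j * g j) = Ek i * g i + (\<Sum>j\<in>{i<..n}. ax (2 * int j + 1) * g j)"
proof (cases "i < n")
  case True
  have "(\<Sum>j\<in>{0..n}. matA0 n \<alpha> i j * g j)
     = (\<Sum>j\<in>{0..n}. (if j = i then Ek i * g j else 0)) + (\<Sum>j\<in>{0..n}. (if i < j then ax (2 * int j + 1) * g j else 0))"
    unfolding sum.distrib[symmetric] using True
    by (intro sum.cong refl) (auto simp: matA0_def Ek_def)
  also have "(\<Sum>j\<in>{0..n}. (if j = i then Ek i * g j else 0)) = Ek i * g i" using assms by simp
  also have "(\<Sum>j\<in>{0..n}. (if i < j then ax (2 * int j + 1) * g j else 0)) = (\<Sum>j\<in>{i<..n}. ax (2 * int j + 1) * g j)"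
    by (subst sum.If_cases) (auto intro!: sum.cong)
  finally show ?thesis .
next
  case False
  then have "i = n" using assms by simp
  then show ?thesis by (simp add: matA0_def Ek_n)
qed

lemma R1: assumes "i \<le> n"
  shows "(\<Sum>j\<in>{0..n}. matA1 n \<alpha> i j * g j) = (\<Sum>j<Suc n. ax (2 * int j + 1) * g j)"
  using assms by (auto simp: matA1_def atLeast0AtMost lessThan_Suc_atMost intro!: sum.cong)

lemma row_fps: assumes "k \<le> n" "i \<le> n"
  shows "(1 - fps_X) * (fps_const (Ek k) * Gam k i + fps_X * fps_deriv (Gam k i))
   = (1 - fps_X) * (\<Sum>j\<in>{0..n}. fps_const (matA0 n \<alpha> i j) * Gam k j)
     + fps_X * (\<Sum>j\<in>{0..n}. fps_const (matA1 n \<alpha> i j) * Gam k j)"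
proof (rule fps_ext)
  fix m
  define L where "L x = Ek k * gam k i x + of_nat x * gam k i x" for x
  define Q where "Q x = (\<Sum>j\<in>{0..n}. matA0 n \<alpha> i j * gam k j x)" for x
  define T where "T x = (\<Sum>j\<in>{0..n}. matA1 n \<alpha> i j * gam k j x)" for x
  have Lnth: "fps_nth (fps_const (Ek k) * Gam k i + fps_X * fps_deriv (Gam k i)) x = L x" for x
    by (cases x) (simp_all add: L_def)
  have Qnth: "fps_nth (\<Sum>j\<in>{0..n}. fps_const (matA0 n \<alpha> i j) * Gam k j) x = Q x" for x
    by (simp add: Q_def fps_sum_nth)
  have Tnth: "fps_nth (fps_X * (\<Sum>j\<in>{0..n}. fps_const (matA1 n \<alpha> i j) * Gam k j)) x = (if x = 0 then 0 else T (x - 1))" for x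
    by (simp add: T_def fps_sum_nth)
  have P: "L x - Q x = (Ek k + of_nat x) * gam k n x" for x
  proof -
    have "L x - Q x = (Ek k + of_nat x - Ek i) * gam k i x - (\<Sum>j\<in>{i<..n}. ax (2 * int j + 1) * gam k j x)"
      unfolding L_def Q_def R0[OF assms(2)] by (simp add: algebra_simps)
    also have "\<dots> = (Ek k + of_nat x) * gam k n x" by (rule Plemma[OF assms])
    finally show ?thesis .
  qed
  have S: "T x = (Ek k + of_nat x + 1 - ax 0) * gam k 0 x - (Ek k + of_nat x) * gam k n x" for x
    unfolding T_def R1[OF assms(2)] using Slemma[OF assms(1), of n x] by (simp add: Ek_n)
  show "fps_nth ((1 - fps_X) * (fps_const (Ek k) * Gam k i + fps_X * fps_deriv (Gam k i))) m =
    fps_nth ((1 - fps_X) * (\<Sum>j\<in>{0..n}. fps_const (matA0 n \<alpha> i j) * Gam k j)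
     + fps_X * (\<Sum>j\<in>{0..n}. fps_const (matA1 n \<alpha> i j) * Gam k j)) m"
  proof (cases m)
    case 0
    have "L 0 - Q 0 = 0" using P[of 0] wrap0[OF assms(1)] by simp
    then show ?thesis unfolding 0 fps_add_nth[of "(1 - fps_X) * _" "fps_X * _"] oneX_nth Lnth Qnth Tnth by simp
  next
    case (Suc M)
    have w: "(Ek k + of_nat (Suc M)) * gam k n (Suc M) = (Ek k + of_nat (Suc M) - ax 0) * gam k 0 M"
      by (rule wrap[OF assms(1)])
    have "L (Suc M) - L M = (L (Suc M) - Q (Suc M)) - (L M - Q M) + (Q (Suc M) - Q M)"
      by (simp add: algebra_simps)
    also have "\<dots> = (Ek k + of_nat (Suc M) - ax 0) * gam k 0 M - (Ek k + of_nat M) * gam k n M + (Q (Suc M) - Q M)"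
      unfolding P w ..
    also have "\<dots> = Q (Suc M) - Q M + T M" unfolding S by (simp add: algebra_simps)
    finally have e: "L (Suc M) - L M = Q (Suc M) - Q M + T M" .
    show ?thesis unfolding Suc fps_add_nth[of "(1 - fps_X) * _" "fps_X * _"] oneX_nth Lnth Qnth Tnth using e by simp
  qed
qed


lemma poch_ratio_Suc: "pochhammer (a::complex) (Suc m) / pochhammer b (Suc m) = pochhammer a m / pochhammer b m * ((a + of_nat m) / (b + of_nat m))"
  by (simp add: pochhammer_Suc)

lemma poch_fact_Suc: "pochhammer (a::complex) (Suc m) / fact (Suc m) = pochhammer a m / fact m * ((a + of_nat m) / (1 + of_nat m))"
  by (simp add: pochhammer_Suc add.commute)

definition "rho k l m = (Ak k (n+1) + of_nat m) / (1 + of_nat m)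
   * (\<Prod>j\<in>{1..l}. (Ak k j + 1 + of_nat m) / (Bk k j + 1 + of_nat m))
   * (\<Prod>j\<in>{l+1..n}. (Ak k j + of_nat m) / (Bk k j + of_nat m))"

lemma Ck_Suc: "Ck k l (Suc m) = rho k l m * Ck k l m"
proof -
  have 1: "(\<Prod>j\<in>{1..l}. pochhammer (Ak k j) (Suc m + 1) / pochhammer (Bk k j) (Suc m + 1))
    = (\<Prod>j\<in>{1..l}. pochhammer (Ak k j) (m + 1) / pochhammer (Bk k j) (m + 1)) * (\<Prod>j\<in>{1..l}. (Ak k j + 1 + of_nat m) / (Bk k j + 1 + of_nat m))"
    unfolding prod.distrib[symmetric] by (intro prod.cong refl) (simp only: Suc_eq_plus1[symmetric] poch_ratio_Suc, simp add: add_ac)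
  have 2: "(\<Prod>j\<in>{l+1..n}. pochhammer (Ak k j) (Suc m) / pochhammer (Bk k j) (Suc m))
    = (\<Prod>j\<in>{l+1..n}. pochhammer (Ak k j) m / pochhammer (Bk k j) m) * (\<Prod>j\<in>{l+1..n}. (Ak k j + of_nat m) / (Bk k j + of_nat m))"
    unfolding prod.distrib[symmetric] by (intro prod.cong refl) (simp only: poch_ratio_Suc)
  show ?thesis
    unfolding Ck_def rho_def poch_fact_Suc 1 2 by (simp add: mult_ac)
qed

lemma ratio_lim: "((\<lambda>m. (a + of_nat m) / (b + of_nat m)) \<longlongrightarrow> (1::complex)) sequentially"
proof -
  have "((\<lambda>m. (a / of_nat m + 1) / (b / of_nat m + 1)) \<longlongrightarrow> (0 + 1) / (0 + 1)) sequentially"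
    by (intro tendsto_intros) auto
  then have *: "((\<lambda>m. (a / of_nat m + 1) / (b / of_nat m + 1)) \<longlongrightarrow> 1) sequentially" by simp
  have "eventually (\<lambda>m. (a / of_nat m + 1) / (b / of_nat m + 1) = (a + of_nat m) / (b + of_nat m)) sequentially"
    using eventually_gt_at_top[of 0]
  proof eventually_elim
    case (elim m)
    then have m: "(of_nat m :: complex) \<noteq> 0" by simp
    have "a / of_nat m + 1 = (a + of_nat m) / of_nat m" "b / of_nat m + 1 = (b + of_nat m) / of_nat m"
      using m by (simp_all add: field_simps)
    then show ?case using m by simp
  qed
  then show ?thesis using * by (rule Lim_transform_eventually[rotated])
qed

lemma rho_lim: "(rho k l \<longlongrightarrow> 1) sequentially"
proof -
  have "((\<lambda>m. rho k l m) \<longlongrightarrow> 1 * (\<Prod>j\<in>{1..l}. 1) * (\<Prod>j\<in>{l+1..n}. 1)) sequentially"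
    unfolding rho_def by (intro tendsto_mult tendsto_prod ratio_lim)
  then show ?thesis by simp
qed

lemma Ck_summable: assumes "0 < r" "r < 1"
  shows "summable (\<lambda>m. Ck k l m * of_real r ^ m)"
proof -
  have "((\<lambda>m. norm (rho k l m)) \<longlongrightarrow> norm (1::complex)) sequentially"
    by (intro tendsto_norm rho_lim)
  moreover have "1 < (1 + r) / (2 * r)" using assms by (simp add: field_simps)
  ultimately have "eventually (\<lambda>m. norm (rho k l m) < (1 + r) / (2 * r)) sequentially"
    by (intro order_tendstoD(2)) auto
  then obtain N where N: "\<And>m. m \<ge> N \<Longrightarrow> norm (rho k l m) < (1 + r) / (2 * r)"
    unfolding eventually_sequentially by blast
  show ?thesis
  proof (rule summable_ratio_test[where c = "(1 + r) / 2" and N = N])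
    show "(1 + r) / 2 < 1" using assms by simp
    fix m assume m: "N \<le> m"
    have "norm (Ck k l (Suc m) * of_real r ^ Suc m) = norm (rho k l m) * r * norm (Ck k l m * of_real r ^ m)"
      using assms by (simp add: Ck_Suc norm_mult norm_power mult_ac)
    also have "\<dots> \<le> ((1 + r) / (2 * r)) * r * norm (Ck k l m * of_real r ^ m)"
      using N[OF m] assms by (intro mult_right_mono) auto
    also have "\<dots> = (1 + r) / 2 * norm (Ck k l m * of_real r ^ m)" using assms by simp
    finally show "norm (Ck k l (Suc m) * of_real r ^ Suc m) \<le> (1 + r) / 2 * norm (Ck k l m * of_real r ^ m)" .
  qed
qed

lemma Ck_radius: "fps_conv_radius (Abs_fps (Ck k l)) \<ge> 1"
  unfolding fps_conv_radius_def fps_nth_Abs_fps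
  by (rule conv_radius_geI_ex') (use Ck_summable in auto)


lemma fkl_eval: assumes "l \<le> n" "norm t < 1"
  shows "fkl n \<alpha> k l t = eval_fps (Abs_fps (Ck k l)) t"
proof -
  define Pr where "Pr = (\<Prod>i\<in>{1..l}. Ak k i / Bk k i)"
  define h where "h i = (\<Prod>j\<in>{0..n}. pochhammer (par_a n \<alpha> k l j) i)
      / (fact i * (\<Prod>j\<in>{1..n}. pochhammer (par_b n \<alpha> k l j) i))" for i
  have fk: "fkl n \<alpha> k l t = Pr * (\<Sum>i. h i * t ^ i)"
    unfolding fkl_def hypF_def Pr_def h_def Ak_def Bk_def ..
  have dj: "{1..n} = {1..l} \<union> {l+1..n}" "{1..l} \<inter> {l+1..n} = {}" using assms by auto
  have z: "{0..n} = insert 0 {1..n}" by auto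
  have hc: "Pr * h i = Ck k l i" for i
  proof -
    have a0: "par_a n \<alpha> k l 0 = Ak k (n+1)" by (simp add: par_a_def Ak_def algebra_simps)
    have pa: "(\<Prod>j\<in>{0..n}. pochhammer (par_a n \<alpha> k l j) i)
       = pochhammer (Ak k (n+1)) i * ((\<Prod>j\<in>{1..l}. pochhammer (Ak k j + 1) i) * (\<Prod>j\<in>{l+1..n}. pochhammer (Ak k j) i))"
      unfolding z dj(1) using dj(2) a0
      by (subst prod.insert) (auto simp: prod.union_disjoint par_a_def Ak_def add.commute intro!: arg_cong2[where f="(*)"] prod.cong)
    have pb: "(\<Prod>j\<in>{1..n}. pochhammer (par_b n \<alpha> k l j) i)
       = (\<Prod>j\<in>{1..l}. pochhammer (Bk k j + 1) i) * (\<Prod>j\<in>{l+1..n}. pochhammer (Bk k j) i)"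
      unfolding dj(1) using dj(2)
      by (auto simp: prod.union_disjoint par_b_def Bk_def add.commute intro!: arg_cong2[where f="(*)"] prod.cong)
    have c1: "(\<Prod>j\<in>{1..l}. pochhammer (Ak k j) (i+1) / pochhammer (Bk k j) (i+1))
       = (\<Prod>j\<in>{1..l}. Ak k j) * (\<Prod>j\<in>{1..l}. pochhammer (Ak k j + 1) i) / ((\<Prod>j\<in>{1..l}. Bk k j) * (\<Prod>j\<in>{1..l}. pochhammer (Bk k j + 1) i))"
      by (simp add: pochhammer_rec prod.distrib prod_dividef)
    have c2: "(\<Prod>j\<in>{l+1..n}. pochhammer (Ak k j) i / pochhammer (Bk k j) i)
       = (\<Prod>j\<in>{l+1..n}. pochhammer (Ak k j) i) / (\<Prod>j\<in>{l+1..n}. pochhammer (Bk k j) i)"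
      by (simp add: prod_dividef)
    have p: "Pr = (\<Prod>j\<in>{1..l}. Ak k j) / (\<Prod>j\<in>{1..l}. Bk k j)" unfolding Pr_def by (simp add: prod_dividef)
    show ?thesis unfolding h_def pa pb Ck_def c1 c2 p
      by (simp add: divide_inverse inverse_mult_distrib mult_ac)
  qed
  have sm: "summable (\<lambda>i. Ck k l i * t ^ i)"
  proof -
    have "ereal (norm t) < fps_conv_radius (Abs_fps (Ck k l))"
      using Ck_radius[of k l] assms(2) by (meson ereal_less(3) order.strict_trans2 less_ereal.simps(1))
    then show ?thesis using summable_fps[of t "Abs_fps (Ck k l)"] by simp
  qed
  show ?thesis
  proof (cases "Pr = 0")
    case True
    then have "Ck k l i = 0" for i using hc[of i] by simp
    then show ?thesis using True fk by (simp add: eval_fps_def)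
  next
    case False
    have "summable (\<lambda>i. h i * t ^ i)"
    proof -
      have s2: "summable (\<lambda>i. (1 / Pr) * (Ck k l i * t ^ i))" by (rule summable_mult[OF sm])
      have eq: "(\<lambda>i. (1 / Pr) * (Ck k l i * t ^ i)) = (\<lambda>i. h i * t ^ i)"
        using False hc[symmetric] by (auto simp: field_simps)
      show ?thesis using s2 unfolding eq .
    qed
    then have "Pr * (\<Sum>i. h i * t ^ i) = (\<Sum>i. Pr * (h i * t ^ i))" by (rule suminf_mult[symmetric])
    also have "\<dots> = (\<Sum>i. Ck k l i * t ^ i)" by (simp add: hc mult.assoc[symmetric])
    finally show ?thesis using fk by (simp add: eval_fps_def)
  qed
qed

definition "good f \<longleftrightarrow> fps_conv_radius (f :: complex fps) \<ge> 1"

lemma good_lt: "good f \<Longrightarrow> norm t < 1 \<Longrightarrow> ereal (norm t) < fps_conv_radius f"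
  unfolding good_def by (meson ereal_less(3) order.strict_trans2 less_ereal.simps(1))

lemma good_add: "good f \<Longrightarrow> good g \<Longrightarrow> good (f + g)"
  unfolding good_def using fps_conv_radius_add[of f g] by (meson min.boundedI order_trans)
lemma good_diff: "good f \<Longrightarrow> good g \<Longrightarrow> good (f - g)"
  unfolding good_def using fps_conv_radius_diff[of f g] by (meson min.boundedI order_trans)
lemma good_mult: "good f \<Longrightarrow> good g \<Longrightarrow> good (f * g)"
  unfolding good_def using fps_conv_radius_mult[of f g] by (meson min.boundedI order_trans)
lemma good_const: "good (fps_const c)" unfolding good_def by simp
lemma good_X: "good fps_X" unfolding good_def by simp
lemma good_one: "good 1" unfolding good_def by simp
lemma good_deriv: "good f \<Longrightarrow> good (fps_deriv f)"
  unfolding good_def using fps_conv_radius_deriv[of f] by (meson order_trans)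
lemma good_sum: "finite A \<Longrightarrow> (\<And>j. j \<in> A \<Longrightarrow> good (f j)) \<Longrightarrow> good (\<Sum>j\<in>A. f j)"
  by (induction A rule: finite_induct) (auto simp: good_add good_def[of 0])

lemma eval_sum: "finite A \<Longrightarrow> (\<And>j. j \<in> A \<Longrightarrow> good (f j)) \<Longrightarrow> norm t < 1 \<Longrightarrow>
   eval_fps (\<Sum>j\<in>A. f j) t = (\<Sum>j\<in>A. eval_fps (f j) t)"
proof (induction A rule: finite_induct)
  case empty then show ?case by simp
next
  case (insert x F)
  then show ?case
    by (simp add: eval_fps_add good_lt good_sum)
qed

lemma eval_cmult: "good f \<Longrightarrow> norm t < 1 \<Longrightarrow> eval_fps (fps_const c * f) t = c * eval_fps f t"
  by (subst eval_fps_mult) (auto simp: good_lt)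

lemma good_Gam: "good (Gam k i)"
  unfolding Gam_def good_def using Ck_radius fps_conv_radius_mult[of fps_X]
  by (auto intro: order_trans)


lemma solx_eval: assumes "k \<le> n" "i \<le> n" "norm t < 1"
  shows "solx n \<alpha> k i t = t powr Ek k * eval_fps (Gam k i) t"
proof (cases "i \<le> k")
  case True
  then show ?thesis using assms fkl_eval[of "k-i" t k]
    by (simp add: solx_def Ek_def Gam_def)
next
  case False
  have "eval_fps (fps_X * Abs_fps (Ck k (n + k + 1 - i))) t = t * eval_fps (Abs_fps (Ck k (n + k + 1 - i))) t"
    using good_lt[OF good_X assms(3)] good_lt[OF _ assms(3), of "Abs_fps (Ck k (n + k + 1 - i))"] Ck_radius
    by (subst eval_fps_mult) (auto simp: good_def)
  then show ?thesis using assms False fkl_eval[of "n + k + 1 - i" t k]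
    by (simp add: solx_def Ek_def Gam_def)
qed

lemma div_lemma:
  fixes t c g g' S0 S1 :: complex
  assumes E: "(1 - t) * (c * g + t * g') = (1 - t) * S0 + t * S1" and t: "t \<noteq> 0" "1 - t \<noteq> 0"
  shows "c * g / t + g' = S0 / t + S1 / (1 - t)"
proof -
  have "c * g / t + g' = (1 - t) * (c * g + t * g') / (t * (1 - t))" using t by (simp add: field_simps)
  also have "\<dots> = ((1 - t) * S0 + t * S1) / (t * (1 - t))" using E by simp
  also have "\<dots> = S0 / t + S1 / (1 - t)" using t by (simp add: field_simps)
  finally show ?thesis .
qed

lemma slit_nonpos: "t \<in> slit_disc \<Longrightarrow> t \<notin> \<real>\<^sub>\<le>\<^sub>0"
  by (auto simp: slit_disc_def complex_nonpos_Reals_iff)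

lemma deriv_part: assumes "k \<le> n" "i \<le> n" "t \<in> slit_disc"
  shows "((solx n \<alpha> k i) has_field_derivative
           (\<Sum>j\<in>{0..n}. (matA0 n \<alpha> i j / t + matA1 n \<alpha> i j / (1 - t)) * solx n \<alpha> k j t)) (at t)"
proof -
  define c where "c = Ek k"
  have t1: "norm t < 1" using assms(3) by (simp add: slit_disc_def)
  have t0: "t \<noteq> 0" using slit_nonpos[OF assms(3)] by auto
  have t2: "1 - t \<noteq> 0" using t1 by auto
  define G where "G j = eval_fps (Gam k j) t" for j
  define G' where "G' = eval_fps (fps_deriv (Gam k i)) t"
  have d1: "((\<lambda>t. t powr c * eval_fps (Gam k i) t) has_field_derivative
        (c * t powr (c - 1) * G i + t powr c * G')) (at t)"
  proof -
    have p: "((\<lambda>t. t powr c) has_field_derivative c * t powr (c-1)) (at t)"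
      by (rule has_field_derivative_powr[OF slit_nonpos[OF assms(3)]])
    have q: "(eval_fps (Gam k i) has_field_derivative G') (at t)"
      unfolding G'_def by (intro has_field_derivative_eval_fps good_lt good_Gam t1)
    show ?thesis using DERIV_mult[OF p q] by (simp add: G_def mult_ac)
  qed
  have d2: "((solx n \<alpha> k i) has_field_derivative (c * t powr (c - 1) * G i + t powr c * G')) (at t)"
    by (rule has_field_derivative_transform_within_open[OF d1, of "ball 0 1"])
       (use t1 solx_eval assms in \<open>auto simp: c_def\<close>)
  have gs: "good (\<Sum>j\<in>{0..n}. fps_const (f j) * Gam k j)" for f
    by (intro good_sum good_mult good_const good_Gam) auto
  have ev: "eval_fps (\<Sum>j\<in>{0..n}. fps_const (f j) * Gam k j) t = (\<Sum>j\<in>{0..n}. f j * G j)" for f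
    unfolding G_def
    by (subst eval_sum) (auto intro!: good_mult good_const good_Gam t1 sum.cong simp: eval_cmult good_Gam t1)
  have E: "(1 - t) * (c * G i + t * G') = (1 - t) * (\<Sum>j\<in>{0..n}. matA0 n \<alpha> i j * G j) + t * (\<Sum>j\<in>{0..n}. matA1 n \<alpha> i j * G j)"
  proof -
    have "eval_fps ((1 - fps_X) * (fps_const (Ek k) * Gam k i + fps_X * fps_deriv (Gam k i))) t
      = eval_fps ((1 - fps_X) * (\<Sum>j\<in>{0..n}. fps_const (matA0 n \<alpha> i j) * Gam k j)
     + fps_X * (\<Sum>j\<in>{0..n}. fps_const (matA1 n \<alpha> i j) * Gam k j)) t"
      using row_fps[OF assms(1,2)] by simp
    then show ?thesis
      using t1 gs ev
      by (simp add: eval_fps_mult eval_fps_add eval_fps_diff good_lt good_mult good_add good_diff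
            good_const good_X good_one good_Gam good_deriv G_def G'_def c_def)
  qed
  have E2: "c * G i / t + G' = (\<Sum>j\<in>{0..n}. matA0 n \<alpha> i j * G j) / t + (\<Sum>j\<in>{0..n}. matA1 n \<alpha> i j * G j) / (1 - t)"
    by (rule div_lemma[OF E t0 t2])
  have pw: "t powr (c - 1) = t powr c / t" using t0 by (simp add: powr_diff)
  have "c * t powr (c - 1) * G i + t powr c * G' = t powr c * (c * G i / t + G')"
    unfolding pw by (simp add: algebra_simps)
  also have "\<dots> = (\<Sum>j\<in>{0..n}. (matA0 n \<alpha> i j / t + matA1 n \<alpha> i j / (1 - t)) * solx n \<alpha> k j t)"
    unfolding E2 using solx_eval[OF assms(1) _ t1]
    by (simp add: sum_distrib_left sum_divide_distrib sum.distrib algebra_simps G_def c_def)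
  finally show ?thesis using d2 by simp
qed


lemma vdm:
  fixes lam w :: "nat \<Rightarrow> complex"
  assumes "finite K" "inj_on lam K" "\<And>m. (\<Sum>k\<in>K. lam k ^ m * w k) = 0"
  shows "\<forall>k\<in>K. w k = 0"
  using assms
proof (induction K arbitrary: w rule: finite_induct)
  case empty then show ?case by simp
next
  case (insert a F)
  have inj: "inj_on lam F" using insert.prems(1) by (auto simp: inj_on_def)
  have ne: "lam k \<noteq> lam a" if "k \<in> F" for k
    using insert.prems(1) insert.hyps(2) that by (auto simp: inj_on_def)
  define w' where "w' k = (lam k - lam a) * w k" for k
  have "(\<Sum>k\<in>F. lam k ^ m * w' k) = 0" for m
  proof -
    have e1: "lam a ^ Suc m * w a + (\<Sum>k\<in>F. lam k ^ Suc m * w k) = 0"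
      using insert.prems(2)[of "Suc m"] insert.hyps by simp
    have e2: "lam a ^ m * w a + (\<Sum>k\<in>F. lam k ^ m * w k) = 0"
      using insert.prems(2)[of m] insert.hyps by simp
    have "(\<Sum>k\<in>F. lam k ^ m * w' k) = (\<Sum>k\<in>F. lam k ^ Suc m * w k) - lam a * (\<Sum>k\<in>F. lam k ^ m * w k)"
      by (simp add: w'_def sum_distrib_left sum_subtractf[symmetric] algebra_simps)
    also have "\<dots> = (- (lam a ^ Suc m * w a)) - lam a * (- (lam a ^ m * w a))"
    proof -
      have s1: "- (lam a ^ Suc m * w a) = (\<Sum>k\<in>F. lam k ^ Suc m * w k)"
        using e1 by (simp only: neg_eq_iff_add_eq_0)
      have s2: "- (lam a ^ m * w a) = (\<Sum>k\<in>F. lam k ^ m * w k)"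
        using e2 by (simp only: neg_eq_iff_add_eq_0)
      show ?thesis unfolding s1 s2 ..
    qed
    also have "\<dots> = 0" by simp
    finally show ?thesis .
  qed
  then have "\<forall>k\<in>F. w' k = 0" using insert.IH[OF inj] by blast
  then have wF: "\<forall>k\<in>F. w k = 0" using ne by (auto simp: w'_def)
  have "w a + (\<Sum>k\<in>F. w k) = 0" using insert.prems(2)[of 0] insert.hyps by simp
  then have "w a = 0" using wF by simp
  then show ?case using wF by simp
qed

definition "lam k = exp (2 * of_real pi * \<i> * Ek k)"

lemma lam_inj: "inj_on lam {0..n}"
proof (rule inj_onI)
  fix k j assume kj: "k \<in> {0..n}" "j \<in> {0..n}" "lam k = lam j"
  then obtain m :: int where m: "2 * of_real pi * \<i> * Ek k = 2 * of_real pi * \<i> * Ek j + of_int (2 * m) * pi * \<i>"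
    unfolding lam_def exp_eq by blast
  have "2 * of_real pi * \<i> * (Ek k - Ek j - of_int m) = 0"
    using m by (simp add: algebra_simps)
  then have e: "Ek k - Ek j = of_int m" by simp
  show "k = j"
  proof (rule ccontr)
    assume "k \<noteq> j"
    then have "k < j \<or> j < k" by auto
    then show False
    proof
      assume "k < j" then show False using Ek_nonint[of k j] kj e by simp
    next
      assume "j < k"
      then have "Ek j - Ek k \<notin> \<int>" using Ek_nonint[of j k] kj by simp
      moreover have "Ek j - Ek k = of_int (- m)" using e by (simp add: algebra_simps)
      ultimately show False by simp
    qed
  qed
qed

definition "Uset = {z. Re z < 0 \<and> - pi < Im z \<and> Im z < pi}"

lemma exp_U: "z \<in> Uset \<Longrightarrow> exp z \<in> slit_disc"
proof -
  assume z: "z \<in> Uset"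
  have n: "norm (exp z) < 1" using z by (simp add: Uset_def)
  have "\<not> (Im (exp z) = 0 \<and> Re (exp z) \<le> 0)"
  proof
    assume a: "Im (exp z) = 0 \<and> Re (exp z) \<le> 0"
    then have "sin (Im z) = 0" by (simp add: Im_exp)
    then have "Im z = 0" using z sin_eq_0_pi by (auto simp: Uset_def)
    then have "Re (exp z) > 0" by (simp add: Re_exp)
    then show False using a by simp
  qed
  then show ?thesis using n by (simp add: slit_disc_def)
qed

lemma solx_exp: assumes "k \<le> n" "i \<le> n" "Re z < 0" "- pi < Im z" "Im z \<le> pi"
  shows "solx n \<alpha> k i (exp z) = exp (Ek k * z) * eval_fps (Gam k i) (exp z)"
proof -
  have "norm (exp z) < 1" using assms by simp
  then show ?thesis using solx_eval[OF assms(1,2)] assms by (simp add: powr_def mult.commute)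
qed

lemma indep:
  assumes H: "\<forall>t\<in>slit_disc. \<forall>i\<le>n. (\<Sum>k\<in>{0..n}. c k * solx n \<alpha> k i t) = 0"
  shows "\<forall>k\<le>n. c k = 0"
proof -
  define F where "F i z = (\<Sum>k\<in>{0..n}. c k * (exp (Ek k * z) * eval_fps (Gam k i) (exp z)))" for i z
  have Fhol: "F i holomorphic_on {z. Re z < 0}" for i
  proof -
    have "(\<lambda>z. eval_fps (Gam k i) (exp z)) holomorphic_on {z. Re z < 0}" for k
    proof -
      have "(eval_fps (Gam k i) \<circ> exp) holomorphic_on {z. Re z < 0}"
      proof (rule holomorphic_on_compose)
        show "exp holomorphic_on {z. Re z < 0}" by (intro holomorphic_intros)
        show "eval_fps (Gam k i) holomorphic_on exp ` {z. Re z < 0}"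
        proof (rule holomorphic_on_eval_fps)
          show "exp ` {z. Re z < 0} \<subseteq> eball 0 (fps_conv_radius (Gam k i))"
          proof
            fix y assume "y \<in> exp ` {z. Re z < 0}"
            then obtain x where "Re x < 0" "y = exp x" by auto
            then have "norm y < 1" by simp
            then show "y \<in> eball 0 (fps_conv_radius (Gam k i))"
              using good_lt[OF good_Gam, of y k i] by (simp add: dist_norm)
          qed
        qed
      qed
      then show ?thesis by (simp add: o_def)
    qed
    then show ?thesis unfolding F_def by (intro holomorphic_intros)
  qed
  have FU: "F i z = 0" if "i \<le> n" "z \<in> Uset" for i z
  proof -
    have "F i z = (\<Sum>k\<in>{0..n}. c k * solx n \<alpha> k i (exp z))"
      unfolding F_def using that by (intro sum.cong refl) (auto simp: solx_exp Uset_def)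
    also have "\<dots> = 0" using H exp_U that by blast
    finally show ?thesis .
  qed
  have openU: "open Uset" unfolding Uset_def
    by (intro open_Collect_conj open_Collect_less continuous_intros)
  have m1U: "-1 \<in> Uset" by (simp add: Uset_def)
  have Fall: "F i z = 0" if "i \<le> n" "Re z < 0" for i z
    by (rule analytic_continuation[OF Fhol[of i] open_halfspace_Re_lt connected_halfspace_Re_lt, of Uset "-1"])
       (use that FU open_imp_islimpt[OF openU m1U] in \<open>auto simp: Uset_def\<close>)
  have W: "c k * (exp (Ek k * z) * eval_fps (Gam k i) (exp z)) = 0" if "i \<le> n" "Re z < 0" "k \<le> n" for i z k
  proof -
    have "\<forall>k\<in>{0..n}. c k * (exp (Ek k * z) * eval_fps (Gam k i) (exp z)) = 0"
    proof (rule vdm[OF _ lam_inj])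
      fix m :: nat
      have "F i (z + \<i> * (of_int (int m) * (of_real pi * 2))) = 0" using Fall that by simp
      moreover have "exp (Ek k * (z + \<i> * (of_int (int m) * (of_real pi * 2)))) = lam k ^ m * exp (Ek k * z)" for k
      proof -
        have "exp (Ek k * (z + \<i> * (of_int (int m) * (of_real pi * 2)))) = exp (of_nat m * (2 * of_real pi * \<i> * Ek k)) * exp (Ek k * z)"
          by (simp add: exp_add[symmetric] algebra_simps)
        then show ?thesis by (simp add: exp_of_nat_mult lam_def)
      qed
      moreover have "exp (z + \<i> * (of_nat m * (of_real pi * 2))) = exp z"
        using exp_plus_2pin[of z "int m"] by simp
      ultimately show "(\<Sum>k\<in>{0..n}. lam k ^ m * (c k * (exp (Ek k * z) * eval_fps (Gam k i) (exp z)))) = 0"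
        unfolding F_def by (simp add: mult_ac)
    qed simp
    then show ?thesis using that by simp
  qed
  show ?thesis
  proof (intro allI impI)
    fix k assume k: "k \<le> n"
    define G where "G = eval_fps (Gam k k)"
    have G0: "G 0 = 1" unfolding G_def by (simp add: eval_fps_at_0 Gam_def F3)
    have cont: "isCont G 0" unfolding G_def
      by (rule continuous_eval_fps) (use good_lt[OF good_Gam, of 0 k k] in simp)
    have "((\<lambda>m. of_real (1 / (real m + 2))) \<longlongrightarrow> (0::complex)) sequentially"
    proof -
      have "((\<lambda>m. 1 / (real m + 2)) \<longlongrightarrow> 0) sequentially" by real_asymp
      then show ?thesis by (metis (no_types) of_real_0 tendsto_of_real)
    qed
    then have "((\<lambda>m. G (of_real (1 / (real m + 2)))) \<longlongrightarrow> G 0) sequentially"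
      by (rule isCont_tendsto_compose[OF cont])
    then have "eventually (\<lambda>m. G (of_real (1 / (real m + 2))) \<noteq> 0) sequentially"
      using G0 by (intro tendsto_imp_eventually_ne) auto
    then obtain m where m: "G (of_real (1 / (real m + 2))) \<noteq> 0"
      using eventually_happens'[OF sequentially_bot] by blast
    define r where "r = 1 / (real m + 2)"
    have r: "0 < r" "r < 1" by (auto simp: r_def)
    define z where "z = complex_of_real (ln r)"
    have ez: "exp z = of_real r" using r by (simp add: z_def exp_of_real)
    have rz: "Re z < 0" using r by (simp add: z_def)
    have "c k * (exp (Ek k * z) * G (exp z)) = 0" using W[OF k rz k] by (simp add: G_def)
    then show "c k = 0" using m ez by (simp add: r_def)
  qed
qed

end

theorem theorem3p1:
  fixes n :: nat and \<alpha> :: "nat \<Rightarrow> complex"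
  assumes "n \<ge> 1"
    and "(\<Sum>i\<in>{0..2*n+1}. \<alpha> i) = 1"
    and "\<And>i j. 1 \<le> i \<Longrightarrow> i \<le> n \<Longrightarrow> 1 \<le> j \<Longrightarrow> j \<le> n - i + 1 \<Longrightarrow>
           alpha_sum n \<alpha> (2 * int i) (2 * int j - 1) \<notin> \<int>"
    and "(\<Sum>i\<in>{0..n}. \<alpha> (2 * i + 1)) \<notin> \<int>"
    and "\<And>i j. 1 \<le> i \<Longrightarrow> i \<le> n \<Longrightarrow> 1 \<le> j \<Longrightarrow> j \<le> n - i + 1 \<Longrightarrow>
           alpha_sum n \<alpha> (2 * int i - 1) (2 * int j - 1) \<notin> \<int>"
  shows "(\<forall>k\<le>n. \<forall>t\<in>slit_disc. \<forall>i\<le>n.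
            ((solx n \<alpha> k i) has_field_derivative
               (\<Sum>j\<in>{0..n}. (matA0 n \<alpha> i j / t + matA1 n \<alpha> i j / (1 - t)) * solx n \<alpha> k j t))
            (at t))
       \<and> (\<forall>c :: nat \<Rightarrow> complex.
            (\<forall>t\<in>slit_disc. \<forall>i\<le>n. (\<Sum>k\<in>{0..n}. c k * solx n \<alpha> k i t) = 0)
            \<longrightarrow> (\<forall>k\<le>n. c k = 0))"
proof -
  interpret hs n \<alpha>
    by unfold_locales (use assms(2,3) in auto)
  show ?thesis
    using deriv_part indep by blast
qed

end
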